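(* Let $f:\mathbb{R}^d\to\mathbb{R}$ be measurable and bounded below with $\int_{\mathbb{R}^d}|f(x')|\varphi_{x,\tau}(x')\,dx'<\infty$ for all $x\in\mathbb{R}^d$, and let $\tau>0$. For $x,\tilde x\in\mathbb{R}^d$ define $$A^H(x,\tilde x) := \log\left(\int_{\mathbb{R}^d}\exp(f(x'))\,q_{\tilde x,\tau}(x')\,dx'\right) + D_{\mathrm{KL}}(\varphi_{x,\tau}\,\|\,q_{\tilde x,\tau}).$$ Then $A^H(x,x)=F^H_\tau(x)$ and $A^H(x,\tilde x)\ge F^H_\tau(x)$ for all $x,\tilde x\in\mathbb{R}^d$. Moreover, for each $\tilde x$, the minimizers of $x\mapsto A^H(x,\tilde x)$ coincide with the minimizers of $x\mapsto D_{\mathrm{KL}}(\varphi_{x,\tau}\|q_{\tilde x,\tau})$.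
   Context: $\varphi_{x,\tau}$ denotes the Gaussian density on $\mathbb{R}^d$ with mean $x$ and covariance $\tau I$. The heat regularization of $f$ is $F^H_\tau(x) := \int_{\mathbb{R}^d} f(x')\,\varphi_{x,\tau}(x')\,dx'$. For $x\in\mathbb{R}^d$, $\tau>0$, $q_{x,\tau}(x') := Z_{x,\tau}^{-1}\exp\left(-f(x') - \frac{1}{2\tau}|x-x'|^2\right)$, with $Z_{x,\tau}$ the normalizing constant. The Kullback–Leibler divergence is $D_{\mathrm{KL}}(p\|q) := \int_{\mathbb{R}^d}\log\left(\frac{p(x)}{q(x)}\right)p(x)\,dx$. *)

theory Defs
  imports "HOL-Analysis.Analysis"
begin

definition gauss :: "'a::euclidean_space \<Rightarrow> real \<Rightarrow> 'a \<Rightarrow> real" where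
  "gauss x \<tau> y = (2 * pi * \<tau>) powr (- real DIM('a) / 2) * exp (- (norm (y - x))\<^sup>2 / (2 * \<tau>))"

definition heat_reg :: "('a::euclidean_space \<Rightarrow> real) \<Rightarrow> real \<Rightarrow> 'a \<Rightarrow> real" where
  "heat_reg f \<tau> x = (\<integral> y. f y * gauss x \<tau> y \<partial>lborel)"

definition Zc :: "('a::euclidean_space \<Rightarrow> real) \<Rightarrow> 'a \<Rightarrow> real \<Rightarrow> real" where
  "Zc f x \<tau> = (\<integral> y. exp (- f y - (norm (x - y))\<^sup>2 / (2 * \<tau>)) \<partial>lborel)"

definition qdens :: "('a::euclidean_space \<Rightarrow> real) \<Rightarrow> 'a \<Rightarrow> real \<Rightarrow> 'a \<Rightarrow> real" where
  "qdens f x \<tau> y = exp (- f y - (norm (x - y))\<^sup>2 / (2 * \<tau>)) / Zc f x \<tau>"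

definition KL :: "('a::euclidean_space \<Rightarrow> real) \<Rightarrow> ('a \<Rightarrow> real) \<Rightarrow> real" where
  "KL p q = (\<integral> y. ln (p y / q y) * p y \<partial>lborel)"

definition AH :: "('a::euclidean_space \<Rightarrow> real) \<Rightarrow> real \<Rightarrow> 'a \<Rightarrow> 'a \<Rightarrow> real" where
  "AH f \<tau> x xt = ln (\<integral> y. exp (f y) * qdens f xt \<tau> y \<partial>lborel) + KL (gauss x \<tau>) (qdens f xt \<tau>)"

end

theory Submission
  imports Defs "HOL-Probability.Distributions"
begin

lemma norm_sq_basis: "(norm (z::'a::euclidean_space))\<^sup>2 = (\<Sum>b\<in>Basis. (z \<bullet> b)\<^sup>2)"
proof -
  have "(norm z)\<^sup>2 = z \<bullet> z" by (simp add: power2_norm_eq_inner)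
  also have "\<dots> = (\<Sum>b\<in>Basis. (z \<bullet> b) * (z \<bullet> b))" by (rule euclidean_inner)
  finally show ?thesis by (simp add: power2_eq_square)
qed

lemma gauss_prod:
  assumes "\<tau> > 0"
  shows "gauss x \<tau> (y::'a::euclidean_space) = (\<Prod>b\<in>Basis. normal_density (x\<bullet>b) (sqrt \<tau>) (y\<bullet>b))"
proof -
  have "(\<Prod>b\<in>Basis. normal_density (x\<bullet>b) (sqrt \<tau>) (y\<bullet>b))
     = (\<Prod>b\<in>(Basis::'a set). 1 / sqrt (2 * pi * \<tau>)) * (\<Prod>b\<in>Basis. exp (-(y\<bullet>b - x\<bullet>b)\<^sup>2/ (2 * \<tau>)))"
    unfolding prod.distrib[symmetric] using assms by (simp add: normal_density_def)
  also have "(\<Prod>b\<in>Basis. exp (-(y\<bullet>b - x\<bullet>b)\<^sup>2/ (2 * \<tau>))) = exp (\<Sum>b\<in>Basis. -(y\<bullet>b - x\<bullet>b)\<^sup>2/ (2 * \<tau>))"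
    by (simp add: exp_sum)
  also have "(\<Sum>b\<in>Basis. -(y\<bullet>b - x\<bullet>b)\<^sup>2/ (2 * \<tau>)) = - (norm (y - x))\<^sup>2 / (2 * \<tau>)"
    by (simp add: norm_sq_basis[of "y - x"] sum_divide_distrib[symmetric] sum_negf inner_diff_left)
  also have "(\<Prod>b\<in>(Basis::'a set). 1 / sqrt (2 * pi * \<tau>)) = (2 * pi * \<tau>) powr (- real DIM('a) / 2)"
    using assms by (simp add: sqrt_def[symmetric] powr_half_sqrt[symmetric] powr_realpow[symmetric] powr_powr powr_minus_divide powr_divide)
  finally show ?thesis unfolding gauss_def by simp
qed

lemma gauss_meas[measurable]: "gauss x \<tau> \<in> borel_measurable borel"
  unfolding gauss_def[abs_def] by measurable

lemma gauss_pos: "\<tau> > 0 \<Longrightarrow> gauss x \<tau> y > 0"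
  unfolding gauss_def by simp

lemma gauss_nn:
  assumes "\<tau> > 0"
  shows "(\<integral>\<^sup>+y. ennreal (gauss x \<tau> (y::'a::euclidean_space)) \<partial>lborel) = 1"
proof -
  have "(\<integral>\<^sup>+y. ennreal (gauss x \<tau> (y::'a)) \<partial>lborel)
     = (\<integral>\<^sup>+y. (\<Prod>b\<in>Basis. ennreal (normal_density (x\<bullet>b) (sqrt \<tau>) (y\<bullet>b))) \<partial>lborel)"
    using assms by (simp add: gauss_prod prod_ennreal)
  also have "\<dots> = (\<Prod>b\<in>(Basis::'a set). (\<integral>\<^sup>+t. ennreal (normal_density (x\<bullet>b) (sqrt \<tau>) t) \<partial>lborel))"
    by (rule nn_integral_lborel_prod) auto
  also have "\<dots> = 1"
  proof (rule prod.neutral, intro ballI)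
    fix b :: 'a
    show "(\<integral>\<^sup>+t. ennreal (normal_density (x\<bullet>b) (sqrt \<tau>) t) \<partial>lborel) = 1"
      using nn_integral_eq_integral[OF integrable_normal_density[of "sqrt \<tau>" "x\<bullet>b"]] assms by simp
  qed
  finally show ?thesis .
qed

lemma gauss_hbi:
  assumes "\<tau> > 0"
  shows "has_bochner_integral lborel (gauss x \<tau>) 1"
  by (rule has_bochner_integral_nn_integral) (use assms gauss_nn[OF assms] gauss_pos[OF assms] in \<open>auto intro!: AE_I2 less_imp_le\<close>)

lemma key_ineq:
  assumes "\<tau> > 0" "r \<ge> 0"
  shows "r * exp (- r\<^sup>2 / (2 * \<tau>)) \<le> sqrt \<tau> * exp (- r\<^sup>2 / (4 * \<tau>))"
proof -
  define s where "s = sqrt \<tau>"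
  have s: "s > 0" "s\<^sup>2 = \<tau>" using assms by (auto simp: s_def)
  have "r \<le> s + r\<^sup>2 / (4 * s)"
  proof -
    have "0 \<le> (2 * s - r)\<^sup>2 / (4 * s)" using s by simp
    also have "(2 * s - r)\<^sup>2 / (4 * s) = s + r\<^sup>2 / (4 * s) - r"
      using s by (simp add: field_simps power2_eq_square)
    finally show ?thesis by simp
  qed
  also have "s + r\<^sup>2 / (4 * s) = s * (1 + r\<^sup>2 / (4 * \<tau>))"
    using s assms(1) by (simp add: field_simps power2_eq_square)
  also have "\<dots> \<le> s * exp (r\<^sup>2 / (4 * \<tau>))"
    using s by (intro mult_left_mono) (auto intro: exp_ge_add_one_self)
  finally have 1: "r \<le> s * exp (r\<^sup>2 / (4 * \<tau>))" .
  have e: "exp (- r\<^sup>2 / (2 * \<tau>)) = exp (- r\<^sup>2 / (4 * \<tau>)) * exp (- r\<^sup>2 / (4 * \<tau>))"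
    using assms by (simp add: exp_add[symmetric] field_simps)
  have "r * exp (- r\<^sup>2 / (2 * \<tau>)) \<le> s * exp (r\<^sup>2 / (4 * \<tau>)) * exp (- r\<^sup>2 / (2 * \<tau>))"
    using 1 by (intro mult_right_mono) auto
  also have "\<dots> = s * exp (- r\<^sup>2 / (4 * \<tau>))"
    unfolding e by (simp add: mult.assoc exp_minus[symmetric] exp_add[symmetric]) 
  finally show ?thesis by (simp add: s_def)
qed

lemma moment_integrable:
  assumes "\<tau> > 0"
  shows "integrable lborel (\<lambda>y::'a::euclidean_space. gauss x \<tau> y * ((y - x) \<bullet> v))"
proof (rule Bochner_Integration.integrable_bound)
  define K where "K = norm v * sqrt \<tau> * (2 * pi * \<tau>) powr (- real DIM('a) / 2) / (2 * pi * (2 * \<tau>)) powr (- real DIM('a) / 2)"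
  show "integrable lborel (\<lambda>y. K * gauss x (2 * \<tau>) y)"
  proof -
    have "integrable lborel (gauss x (2*\<tau>))" using gauss_hbi[of "2*\<tau>" x] assms by (auto intro: integrable.intros)
    then show ?thesis by simp
  qed
  show "(\<lambda>y. gauss x \<tau> y * ((y - x) \<bullet> v)) \<in> borel_measurable lborel" by measurable
  show "AE y in lborel. norm (gauss x \<tau> y * ((y - x) \<bullet> v)) \<le> norm (K * gauss x (2 * \<tau>) y)"
  proof (rule AE_I2)
    fix y :: 'a
    define r where "r = norm (y - x)"
    define C1 where "C1 = (2 * pi * \<tau>) powr (- real DIM('a) / 2)"
    define C2 where "C2 = (2 * pi * (2 * \<tau>)) powr (- real DIM('a) / 2)"
    have C: "C1 > 0" "C2 > 0" using assms by (auto simp: C1_def C2_def)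
    have g2: "gauss x (2*\<tau>) y = C2 * exp(-r\<^sup>2/(4*\<tau>))" by (simp add: gauss_def C2_def r_def)
    have K: "K = norm v * sqrt \<tau> * C1 / C2" by (simp add: K_def C1_def C2_def)
    have "norm (gauss x \<tau> y * ((y - x) \<bullet> v)) = C1 * exp (- r\<^sup>2 / (2 * \<tau>)) * \<bar>(y - x) \<bullet> v\<bar>"
      using C by (simp add: gauss_def C1_def r_def abs_mult)
    also have "\<dots> \<le> C1 * exp (- r\<^sup>2 / (2 * \<tau>)) * (r * norm v)"
      unfolding r_def by (intro mult_left_mono Cauchy_Schwarz_ineq2) (use C in auto)
    also have "\<dots> = C1 * norm v * (r * exp (- r\<^sup>2 / (2 * \<tau>)))" by (simp add: ac_simps)
    also have "\<dots> \<le> C1 * norm v * (sqrt \<tau> * exp (- r\<^sup>2 / (4 * \<tau>)))"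
      by (intro mult_left_mono key_ineq) (use C assms in \<open>auto simp: r_def\<close>)
    also have "\<dots> = K * gauss x (2 * \<tau>) y"
      using C unfolding g2 K by (simp add: field_simps)
    also have "\<dots> \<le> norm (K * gauss x (2 * \<tau>) y)" by simp
    finally show "norm (gauss x \<tau> y * ((y - x) \<bullet> v)) \<le> norm (K * gauss x (2 * \<tau>) y)" .
  qed
qed

lemma moment_zero:
  assumes "\<tau> > 0"
  shows "(\<integral>y. gauss x \<tau> y * ((y - x) \<bullet> v) \<partial>lborel) = (0::real)"
proof -
  let ?h = "\<lambda>y::'a. gauss x \<tau> y * ((y - x) \<bullet> v)"
  let ?T = "\<lambda>z::'a. (2 *\<^sub>R x) - z"
  have "distr lborel borel (\<lambda>z::'a. (2 *\<^sub>R x) + (-1::real) *\<^sub>R z) = lborel"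
    using lborel_affine[of "-1::real" "2 *\<^sub>R x"] by (simp add: density_1)
  moreover have "(\<lambda>z::'a. (2 *\<^sub>R x) + (-1::real) *\<^sub>R z) = ?T" by (simp add: fun_eq_iff)
  ultimately have D: "distr lborel borel ?T = lborel" by simp
  have "(\<integral>y. ?h y \<partial>lborel) = (\<integral>y. ?h y \<partial>distr lborel borel ?T)" by (simp only: D)
  also have "\<dots> = (\<integral>z. ?h (?T z) \<partial>lborel)"
    by (rule integral_distr) measurable
  also have "\<dots> = (\<integral>z. - ?h z \<partial>lborel)"
  proof (rule Bochner_Integration.integral_cong[OF refl])
    fix z :: 'a
    have e1: "?T z - x = - (z - x)" by (simp add: algebra_simps scaleR_2)
    have "gauss x \<tau> (?T z) = gauss x \<tau> z"
      unfolding gauss_def e1 by (simp only: norm_minus_cancel)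
    then show "?h (?T z) = - ?h z"
      unfolding e1 by (simp add: inner_diff_left algebra_simps)
  qed
  also have "\<dots> = - (\<integral>y. ?h y \<partial>lborel)" by simp
  finally show ?thesis by simp
qed

lemma sq_ident: "(norm (xt - y))\<^sup>2 = (norm (xt - x))\<^sup>2 - 2 * ((y - x) \<bullet> (xt - x)) + (norm (y - x))\<^sup>2"
  for x y xt :: "'a::euclidean_space"
  by (simp add: power2_norm_eq_inner inner_diff_left inner_diff_right inner_commute algebra_simps)

lemma AH_eq:
  fixes f :: "'a::euclidean_space \<Rightarrow> real"
  assumes meas[measurable]: "f \<in> borel_measurable borel"
    and c: "\<And>y. c \<le> f y"
    and int: "(\<integral>\<^sup>+ y. ennreal (\<bar>f y\<bar> * gauss x \<tau> y) \<partial>lborel) < \<infinity>"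
    and tau: "\<tau> > 0"
  shows "AH f \<tau> x xt = heat_reg f \<tau> x + (norm (xt - x))\<^sup>2 / (2 * \<tau>)"
proof -
  define C where "C = (2 * pi * \<tau>) powr (- real DIM('a) / 2)"
  have C: "C > 0" using tau by (simp add: C_def)
  define E where "E = (\<lambda>y. exp (- (norm (xt - y))\<^sup>2 / (2 * \<tau>)))"
  have E_eq: "E y = gauss xt \<tau> y / C" for y
    using tau by (simp add: E_def gauss_def C_def norm_minus_commute)
  have hE: "has_bochner_integral lborel E (1 / C)"
  proof -
    have "has_bochner_integral lborel (\<lambda>y. gauss xt \<tau> y / C) (1 / C)"
      using has_bochner_integral_divide_zero[OF gauss_hbi[OF tau, of xt], of C] by simp
    then show ?thesis unfolding E_eq[abs_def] .
  qed
  have E_meas[measurable]: "E \<in> borel_measurable borel" unfolding E_def by measurable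
  define Z where "Z = Zc f xt \<tau>"
  have Z_int: "integrable lborel (\<lambda>y. exp (- f y - (norm (xt - y))\<^sup>2 / (2 * \<tau>)))"
  proof (rule Bochner_Integration.integrable_bound)
    show "integrable lborel (\<lambda>y. exp (- c) * E y)"
      using integrable.intros[OF hE] by simp
    show "(\<lambda>y. exp (- f y - (norm (xt - y))\<^sup>2 / (2 * \<tau>))) \<in> borel_measurable lborel" by measurable
    show "AE y in lborel. norm (exp (- f y - (norm (xt - y))\<^sup>2 / (2 * \<tau>))) \<le> norm (exp (- c) * E y)"
    proof (rule AE_I2)
      fix y
      have "exp (- f y - (norm (xt - y))\<^sup>2 / (2 * \<tau>)) = exp (- f y) * E y"
        by (simp add: E_def exp_diff exp_minus field_simps)
      also have "\<dots> \<le> exp (- c) * E y"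
        using c[of y] by (intro mult_right_mono) (auto simp: E_def)
      finally show "norm (exp (- f y - (norm (xt - y))\<^sup>2 / (2 * \<tau>))) \<le> norm (exp (- c) * E y)"
        by (simp add: E_def)
    qed
  qed
  have Z_pos: "Z > 0"
  proof -
    have "Z \<ge> 0" unfolding Z_def Zc_def by (rule integral_nonneg_AE) auto
    moreover have "Z \<noteq> 0"
    proof
      assume "Z = 0"
      then have "AE y in lborel. exp (- f y - (norm (xt - y))\<^sup>2 / (2 * \<tau>)) = 0"
        unfolding Z_def Zc_def using integral_nonneg_eq_0_iff_AE[OF Z_int] by auto
      then have "AE (y::'a) in lborel. False" by simp
      then show False by (subst (asm) AE_iff_measurable[where N=UNIV]) auto
    qed
    ultimately show ?thesis by simp
  qed
  have q_eq: "qdens f xt \<tau> y = exp (- f y - (norm (xt - y))\<^sup>2 / (2 * \<tau>)) / Z" for y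
    by (simp add: qdens_def Z_def)
  have T1: "(\<integral>y. exp (f y) * qdens f xt \<tau> y \<partial>lborel) = 1 / C / Z"
  proof -
    have "(\<lambda>y. exp (f y) * qdens f xt \<tau> y) = (\<lambda>y. E y / Z)"
    proof
      fix y
      have "exp (f y) * exp (- f y - (norm (xt - y))\<^sup>2 / (2 * \<tau>)) = E y"
        by (simp add: E_def exp_add[symmetric])
      then show "exp (f y) * qdens f xt \<tau> y = E y / Z" by (simp add: q_eq)
    qed
    moreover have "(\<integral>y. E y / Z \<partial>lborel) = 1 / C / Z"
      using has_bochner_integral_integral_eq[OF has_bochner_integral_divide_zero[OF hE, of Z]] by simp
    ultimately show ?thesis by simp
  qed
  define K0 where "K0 = ln C + ln Z + (norm (xt - x))\<^sup>2 / (2 * \<tau>)"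
  have pt: "ln (gauss x \<tau> y / qdens f xt \<tau> y) * gauss x \<tau> y
      = K0 * gauss x \<tau> y + f y * gauss x \<tau> y - (1 / \<tau>) * (gauss x \<tau> y * ((y - x) \<bullet> (xt - x)))" for y
  proof -
    have g: "gauss x \<tau> y = C * exp (- (norm (y - x))\<^sup>2 / (2 * \<tau>))"
      by (simp add: gauss_def C_def)
    have "ln (gauss x \<tau> y / qdens f xt \<tau> y)
        = ln C + (- (norm (y - x))\<^sup>2 / (2 * \<tau>)) + ln Z - (- f y - (norm (xt - y))\<^sup>2 / (2 * \<tau>))"
      using C Z_pos by (simp add: g q_eq ln_mult ln_div)
    also have "\<dots> = K0 + f y - (1 / \<tau>) * ((y - x) \<bullet> (xt - x))"
      unfolding K0_def sq_ident[of xt y x] using tau by (simp add: field_simps)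
    finally have L: "ln (gauss x \<tau> y / qdens f xt \<tau> y) = K0 + f y - (1 / \<tau>) * ((y - x) \<bullet> (xt - x))" .
    have R: "\<And>a b t m g::real. (a + b - t*m)*g = a*g+b*g - t*(g*m)" by algebra
    show ?thesis unfolding L by (rule R)
  qed
  have I1: "integrable lborel (\<lambda>y. K0 * gauss x \<tau> y)"
    using integrable.intros[OF gauss_hbi[OF tau, of x]] by simp
  have I2: "integrable lborel (\<lambda>y. f y * gauss x \<tau> y)"
  proof (rule integrableI_bounded)
    show "(\<lambda>y. f y * gauss x \<tau> y) \<in> borel_measurable lborel" by measurable
    have "(\<integral>\<^sup>+ y. ennreal (norm (f y * gauss x \<tau> y)) \<partial>lborel) = (\<integral>\<^sup>+ y. ennreal (\<bar>f y\<bar> * gauss x \<tau> y) \<partial>lborel)"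
      using gauss_pos[OF tau, of x] by (intro nn_integral_cong) (simp add: abs_mult less_imp_le)
    then show "(\<integral>\<^sup>+ y. ennreal (norm (f y * gauss x \<tau> y)) \<partial>lborel) < \<infinity>" using int by simp
  qed
  have I3: "integrable lborel (\<lambda>y. (1 / \<tau>) * (gauss x \<tau> y * ((y - x) \<bullet> (xt - x))))"
    using moment_integrable[OF tau, of x "xt - x"] by simp
  have KL: "KL (gauss x \<tau>) (qdens f xt \<tau>) = K0 + heat_reg f \<tau> x"
  proof -
    have "KL (gauss x \<tau>) (qdens f xt \<tau>) = (\<integral>y. K0 * gauss x \<tau> y + f y * gauss x \<tau> y - (1 / \<tau>) * (gauss x \<tau> y * ((y - x) \<bullet> (xt - x))) \<partial>lborel)"
      unfolding KL_def pt ..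
    also have "\<dots> = (\<integral>y. K0 * gauss x \<tau> y \<partial>lborel) + (\<integral>y. f y * gauss x \<tau> y \<partial>lborel) - (\<integral>y. (1 / \<tau>) * (gauss x \<tau> y * ((y - x) \<bullet> (xt - x))) \<partial>lborel)"
      using I1 I2 I3 by (simp add: Bochner_Integration.integral_add Bochner_Integration.integral_diff)
    also have "(\<integral>y. K0 * gauss x \<tau> y \<partial>lborel) = K0"
      using has_bochner_integral_integral_eq[OF gauss_hbi[OF tau, of x]] by simp
    also have "(\<integral>y. (1 / \<tau>) * (gauss x \<tau> y * ((y - x) \<bullet> (xt - x))) \<partial>lborel) = 0"
      using moment_zero[OF tau, of x "xt - x"] by simp
    finally show ?thesis by (simp add: heat_reg_def)
  qed
  have "AH f \<tau> x xt = ln (1 / C / Z) + (K0 + heat_reg f \<tau> x)"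
    unfolding AH_def T1 KL ..
  also have "\<dots> = heat_reg f \<tau> x + (norm (xt - x))\<^sup>2 / (2 * \<tau>)"
    using C Z_pos by (simp add: K0_def ln_div ln_mult)
  finally show ?thesis .
qed

theorem mainTheorem6:
  fixes f :: "'a::euclidean_space \<Rightarrow> real" and \<tau> :: real
  assumes meas: "f \<in> borel_measurable borel"
    and bdd: "\<exists>c. \<forall>y. c \<le> f y"
    and int: "\<And>x. (\<integral>\<^sup>+ y. ennreal (\<bar>f y\<bar> * gauss x \<tau> y) \<partial>lborel) < \<infinity>"
    and tau: "\<tau> > 0"
  shows "(\<forall>x. AH f \<tau> x x = heat_reg f \<tau> x)
       \<and> (\<forall>x xt. AH f \<tau> x xt \<ge> heat_reg f \<tau> x)
       \<and> (\<forall>xt. {x. \<forall>y. AH f \<tau> x xt \<le> AH f \<tau> y xt}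
               = {x. \<forall>y. KL (gauss x \<tau>) (qdens f xt \<tau>) \<le> KL (gauss y \<tau>) (qdens f xt \<tau>)})"
proof -
  obtain c where c: "\<And>y. c \<le> f y" using bdd by blast
  have eq: "AH f \<tau> x xt = heat_reg f \<tau> x + (norm (xt - x))\<^sup>2 / (2 * \<tau>)" for x xt
    by (rule AH_eq[OF meas c int tau])
  have 1: "\<forall>x. AH f \<tau> x x = heat_reg f \<tau> x" by (simp add: eq)
  have 2: "\<forall>x xt. AH f \<tau> x xt \<ge> heat_reg f \<tau> x" using tau by (simp add: eq)
  have 3: "\<forall>xt. {x. \<forall>y. AH f \<tau> x xt \<le> AH f \<tau> y xt}
               = {x. \<forall>y. KL (gauss x \<tau>) (qdens f xt \<tau>) \<le> KL (gauss y \<tau>) (qdens f xt \<tau>)}"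
    by (simp add: AH_def)
  from 1 2 3 show ?thesis by blast
qed

end
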